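(* Let $\Gamma$ be a distance-regular graph with diameter $D\ge3$ and $a_1\ne0$. Let $\sigma_0,\dots,\sigma_D$ be a nontrivial pseudo cosine sequence which is tight, with auxiliary parameter $\varepsilon$, and write $\sigma=\sigma_1$. Then for $1\le i\le D-1$ the quantities $(\sigma_{i+1}-\sigma_i)(\sigma_{i-1}-\sigma_i)$ and $(\sigma^2-\sigma_2)(1-\varepsilon\sigma)$ are nonzero and $$a_i=g\,\frac{(\sigma_{i+1}-\sigma\sigma_i)(\sigma_{i-1}-\sigma\sigma_i)}{(\sigma_{i+1}-\sigma_i)(\sigma_{i-1}-\sigma_i)},\qquad\text{where}\quad g=\frac{(\varepsilon-1)(1-\sigma_2)}{(\sigma^2-\sigma_2)(1-\varepsilon\sigma)}.$$
   Context: $\Gamma$ is a finite connected undirected graph without loops or multiple edges, distance-regular with diameter $D$, intersection numbers $a_i,b_i,c_i$ ($c_0=0$, $b_D=0$), valency $k$, $c_i+a_i+b_i=k$. For $\theta\in\mathbb{R}$ the pseudo cosine sequence for $\theta$ is the sequence of reals $\sigma_0,\dots,\sigma_D$ with $\sigma_0=1$ and $c_i\sigma_{i-1}+a_i\sigma_i+b_i\sigma_{i+1}=\theta\sigma_i$ for $0\le i\le D-1$; nontrivial means $\sigma_1\ne1$. Pseudo cosine sequences $\sigma_i$, $\rho_i$ form a tight pair if $(\sigma_i\rho_i)_{i=0}^D$ is a pseudo cosine sequence. For a tight pair of nontrivial pseudo cosine sequences, an auxiliary parameter is a real $\varepsilon$ with $\sigma_i\rho_i-\sigma_{i-1}\rho_{i-1}=\varepsilon(\sigma_{i-1}\rho_i-\sigma_i\rho_{i-1})$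 for $1\le i\le D$. When $a_1\ne0$, a nontrivial pseudo cosine sequence is tight if some nontrivial pseudo cosine sequence forms a tight pair with it; its auxiliary parameter is the (uniquely determined) auxiliary parameter of that pair. *)

theory Defs
  imports Complex_Main
begin

definition simple_graph :: "'v set \<Rightarrow> ('v \<Rightarrow> 'v \<Rightarrow> bool) \<Rightarrow> bool" where
  "simple_graph V E \<longleftrightarrow> finite V \<and> V \<noteq> {} \<and>
     (\<forall>x y. E x y \<longrightarrow> x \<in> V \<and> y \<in> V) \<and>
     (\<forall>x y. E x y \<longrightarrow> E y x) \<and> (\<forall>x. \<not> E x x)"

fun walk_n :: "'v set \<Rightarrow> ('v \<Rightarrow> 'v \<Rightarrow> bool) \<Rightarrow> nat \<Rightarrow> 'v \<Rightarrow> 'v \<Rightarrow> bool" where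
  "walk_n V E 0 x y = (x = y \<and> x \<in> V)"
| "walk_n V E (Suc n) x y = (\<exists>z. E x z \<and> walk_n V E n z y)"

definition connected_graph :: "'v set \<Rightarrow> ('v \<Rightarrow> 'v \<Rightarrow> bool) \<Rightarrow> bool" where
  "connected_graph V E \<longleftrightarrow> (\<forall>x\<in>V. \<forall>y\<in>V. \<exists>n. walk_n V E n x y)"

definition gdist :: "'v set \<Rightarrow> ('v \<Rightarrow> 'v \<Rightarrow> bool) \<Rightarrow> 'v \<Rightarrow> 'v \<Rightarrow> nat" where
  "gdist V E x y = (LEAST n. walk_n V E n x y)"

definition diameter :: "'v set \<Rightarrow> ('v \<Rightarrow> 'v \<Rightarrow> bool) \<Rightarrow> nat" where
  "diameter V E = Max {gdist V E x y | x y. x \<in> V \<and> y \<in> V}"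

definition distance_regular ::
  "'v set \<Rightarrow> ('v \<Rightarrow> 'v \<Rightarrow> bool) \<Rightarrow> nat \<Rightarrow> (nat \<Rightarrow> nat) \<Rightarrow> (nat \<Rightarrow> nat) \<Rightarrow> (nat \<Rightarrow> nat) \<Rightarrow> bool" where
  "distance_regular V E D a b c \<longleftrightarrow>
     simple_graph V E \<and> connected_graph V E \<and> diameter V E = D \<and>
     c 0 = 0 \<and> b D = 0 \<and>
     (\<forall>x\<in>V. \<forall>y\<in>V. let i = gdist V E x y in
        (1 \<le> i \<longrightarrow> card {z\<in>V. E y z \<and> gdist V E x z + 1 = i} = c i) \<and>
        card {z\<in>V. E y z \<and> gdist V E x z = i} = a i \<and>
        (i < D \<longrightarrow> card {z\<in>V. E y z \<and> gdist V E x z = i + 1} = b i))"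

text \<open>Pseudo cosine sequence for theta (only sigma 0 .. sigma D matter).\<close>
definition pseudo_cosine ::
  "nat \<Rightarrow> (nat \<Rightarrow> nat) \<Rightarrow> (nat \<Rightarrow> nat) \<Rightarrow> (nat \<Rightarrow> nat) \<Rightarrow> real \<Rightarrow> (nat \<Rightarrow> real) \<Rightarrow> bool" where
  "pseudo_cosine D a b c \<theta> \<sigma> \<longleftrightarrow> \<sigma> 0 = 1 \<and>
     (\<forall>i<D. real (c i) * (if i = 0 then 0 else \<sigma> (i - 1)) + real (a i) * \<sigma> i
              + real (b i) * \<sigma> (i + 1) = \<theta> * \<sigma> i)"

definition is_pseudo_cosine ::
  "nat \<Rightarrow> (nat \<Rightarrow> nat) \<Rightarrow> (nat \<Rightarrow> nat) \<Rightarrow> (nat \<Rightarrow> nat) \<Rightarrow> (nat \<Rightarrow> real) \<Rightarrow> bool" where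
  "is_pseudo_cosine D a b c \<sigma> \<longleftrightarrow> (\<exists>\<theta>. pseudo_cosine D a b c \<theta> \<sigma>)"

definition nontrivial_pc ::
  "nat \<Rightarrow> (nat \<Rightarrow> nat) \<Rightarrow> (nat \<Rightarrow> nat) \<Rightarrow> (nat \<Rightarrow> nat) \<Rightarrow> (nat \<Rightarrow> real) \<Rightarrow> bool" where
  "nontrivial_pc D a b c \<sigma> \<longleftrightarrow> is_pseudo_cosine D a b c \<sigma> \<and> \<sigma> 1 \<noteq> 1"

definition tight_pair ::
  "nat \<Rightarrow> (nat \<Rightarrow> nat) \<Rightarrow> (nat \<Rightarrow> nat) \<Rightarrow> (nat \<Rightarrow> nat) \<Rightarrow> (nat \<Rightarrow> real) \<Rightarrow> (nat \<Rightarrow> real) \<Rightarrow> bool" where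
  "tight_pair D a b c \<sigma> \<rho> \<longleftrightarrow> is_pseudo_cosine D a b c \<sigma> \<and> is_pseudo_cosine D a b c \<rho> \<and>
     is_pseudo_cosine D a b c (\<lambda>i. \<sigma> i * \<rho> i)"

definition auxiliary_parameter ::
  "nat \<Rightarrow> (nat \<Rightarrow> real) \<Rightarrow> (nat \<Rightarrow> real) \<Rightarrow> real \<Rightarrow> bool" where
  "auxiliary_parameter D \<sigma> \<rho> \<epsilon> \<longleftrightarrow>
     (\<forall>i. 1 \<le> i \<and> i \<le> D \<longrightarrow>
        \<sigma> i * \<rho> i - \<sigma> (i - 1) * \<rho> (i - 1) = \<epsilon> * (\<sigma> (i - 1) * \<rho> i - \<sigma> i * \<rho> (i - 1)))"

definition tight_with_aux ::
  "nat \<Rightarrow> (nat \<Rightarrow> nat) \<Rightarrow> (nat \<Rightarrow> nat) \<Rightarrow> (nat \<Rightarrow> nat) \<Rightarrow> (nat \<Rightarrow> real) \<Rightarrow> real \<Rightarrow> bool" where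
  "tight_with_aux D a b c \<sigma> \<epsilon> \<longleftrightarrow>
     (\<exists>\<rho>. nontrivial_pc D a b c \<rho> \<and> tight_pair D a b c \<sigma> \<rho> \<and>
          auxiliary_parameter D \<sigma> \<rho> \<epsilon>)"

end

theory Submission
  imports Defs
begin


lemma KA_core:
  fixes a b c k sg rh ep sm s sp rm r rp :: real
  assumes h0: "a+b+c = k" and hS: "c*sm + a*s + b*sp = k*sg*s" and hR: "c*rm + a*r + b*rp = k*rh*r"
    and h1: "s*r - sm*rm = ep*(sm*r - s*rm)" and h2: "sp*rp - s*r = ep*(s*rp - sp*r)"
    and h3: "sg*rh - 1 = ep*(rh - sg)"
  shows "r*(1+ep)*(a*(sp-s)*(sm-s)*(sg-ep) - k*(1-ep)*(sp-sg*s)*(sm-sg*s)) = 0"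
proof -
  have ha: "a = k - b - c" using h0 by linarith
  have I1: "rm*(sm - ep*s) = r*(s - ep*sm)" using h1 by (simp add: algebra_simps)
  have I2: "rp*(sp - ep*s) = r*(s - ep*sp)" using h2 by (simp add: algebra_simps)
  have I3: "(rh-1)*(sg-ep) = (1+ep)*(1-sg)" using h3 by (simp add: algebra_simps)
  have Rd: "c*(rm-r) + b*(rp-r) = k*(rh-1)*r" using hR unfolding ha by (simp add: algebra_simps)
  have Sd: "c*(sm-s) + b*(sp-s) = k*(sg-1)*s" using hS unfolding ha by (simp add: algebra_simps)
  define A where "A = sm - ep*s"
  define B where "B = sp - ep*s"
  have e1: "(sg-ep)*A*B*(c*(rm-r) + b*(rp-r)) = (sg-ep)*(c*(rm*A - r*A)*B + b*(rp*B - r*B)*A)"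
    by (simp add: algebra_simps)
  have e2: "rm*A = r*(s - ep*sm)" "rp*B = r*(s - ep*sp)" using I1 I2 by (simp_all add: A_def B_def)
  have e3: "(sg-ep)*A*B*(k*(rh-1)*r) = A*B*k*r*((rh-1)*(sg-ep))" by (simp add: algebra_simps)
  have E: "A*B*k*r*((1+ep)*(1-sg)) = (sg-ep)*(c*(r*(s - ep*sm) - r*A)*B + b*(r*(s - ep*sp) - r*B)*A)"
    using e1 e2 e3 Rd I3 by simp
  have E1: "r*(1+ep)*(c*(s-sm)*B*(sg-ep) + b*(s-sp)*A*(sg-ep) - k*(1-sg)*A*B) = 0"
  proof -
    have "r*(1+ep)*(c*(s-sm)*B*(sg-ep) + b*(s-sp)*A*(sg-ep) - k*(1-sg)*A*B) =
      (sg-ep)*(c*(r*(s - ep*sm) - r*A)*B + b*(r*(s - ep*sp) - r*B)*A) - A*B*k*r*((1+ep)*(1-sg))"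
      unfolding A_def B_def by (simp add: algebra_simps)
    then show ?thesis using E by simp
  qed
  have id: "a*(sp-s)*(sm-s)*(sg-ep) - k*(1-ep)*(sp-sg*s)*(sm-sg*s)
     = (c*(s-sm)*B*(sg-ep) + b*(s-sp)*A*(sg-ep) - k*(1-sg)*A*B) + (sg-ep)*(1-ep)*s*(c*(sm-s) + b*(sp-s) - k*(sg-1)*s)"
    unfolding ha A_def B_def by (simp add: algebra_simps)
  show ?thesis using E1 Sd unfolding id by (simp add: algebra_simps)
qed

lemma KA_full:
  fixes a b c k sg rh ep sm s sp rm r rp :: real
  assumes h0: "a+b+c = k" and hS: "c*sm + a*s + b*sp = k*sg*s" and hR: "c*rm + a*r + b*rp = k*rh*r"
    and h1: "s*r - sm*rm = ep*(sm*r - s*rm)" and h2: "sp*rp - s*r = ep*(s*rp - sp*r)"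
    and h3: "sg*rh - 1 = ep*(rh - sg)"
    and ne: "ep \<noteq> -1" and cne: "c \<noteq> 0" and rr: "\<not> (rm = 0 \<and> r = 0)"
  shows "a*(sp-s)*(sm-s)*(sg-ep) = k*(1-ep)*(sp-sg*s)*(sm-sg*s)"
proof (cases "r = 0")
  case False
  have "r*(1+ep)*(a*(sp-s)*(sm-s)*(sg-ep) - k*(1-ep)*(sp-sg*s)*(sm-sg*s)) = 0"
    by (rule KA_core[OF h0 hS hR h1 h2 h3])
  moreover have "1 + ep \<noteq> 0" using ne by linarith
  ultimately show ?thesis using False by simp
next
  case True
  then have rm: "rm \<noteq> 0" using rr by simp
  have "rm*(sm - ep*s) = 0" using h1 True by (simp add: algebra_simps)
  then have smv: "sm = ep*s" using rm by simp
  have "c*rm + b*rp = 0" using hR True by simp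
  then have "rp \<noteq> 0" using rm cne by auto
  moreover have "rp*(sp - ep*s) = 0" using h2 True by (simp add: algebra_simps)
  ultimately have spv: "sp = ep*s" by simp
  have ha: "a = k - b - c" using h0 by linarith
  have "s*(a*(1-ep) - k*(sg-ep)) = 0" using hS unfolding smv spv ha by (simp add: algebra_simps)
  then have z: "(1-ep)*(sg-ep)*s*(s*(a*(1-ep) - k*(sg-ep))) = 0" by (simp only: mult_zero_right)
  have "a*(sp-s)*(sm-s)*(sg-ep) - k*(1-ep)*(sp-sg*s)*(sm-sg*s) = (1-ep)*(sg-ep)*s*(s*(a*(1-ep) - k*(sg-ep)))"
    unfolding smv spv by (simp add: algebra_simps power2_eq_square)
  then show ?thesis using z by (simp only: right_minus_eq)
qed



lemma bad_help:
  fixes x A C :: real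
  assumes "x > 1" "x*(2*A+C) = C" "A \<ge> 1" "C \<ge> 1"
  shows False
proof -
  have "(x-1)*(2*A+C) > 0" using assms by (intro mult_pos_pos) auto
  then have "x*(2*A+C) - (2*A+C) > 0" by (simp add: algebra_simps)
  then show False using assms by linarith
qed

lemma gt1_help:
  fixes x A B :: real
  assumes "B*(x-1) = 2*A" "A \<ge> 1" "B \<ge> 1"
  shows "x > 1"
proof -
  have h: "B*(x-1) > 0" using assms by linarith
  have "B > 0" using assms by linarith
  then have "x - 1 > 0" using zero_less_mult_pos[OF h] by blast
  then show ?thesis by simp
qed

lemma main_alg:
  fixes s r A B C :: "nat \<Rightarrow> real" and k ep :: real and D :: nat
  assumes D3: "D \<ge> 3"
    and s0: "s 0 = 1" and r0: "r 0 = 1" and s1: "s 1 \<noteq> 1" and r1: "r 1 \<noteq> 1"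
    and S: "\<And>i. 1 \<le> i \<Longrightarrow> i < D \<Longrightarrow> C i * s (i-1) + A i * s i + B i * s (i+1) = k * s 1 * s i"
    and R: "\<And>i. 1 \<le> i \<Longrightarrow> i < D \<Longrightarrow> C i * r (i-1) + A i * r i + B i * r (i+1) = k * r 1 * r i"
    and sm: "\<And>i. 1 \<le> i \<Longrightarrow> i < D \<Longrightarrow> A i + B i + C i = k"
    and pA: "\<And>i. 1 \<le> i \<Longrightarrow> i < D \<Longrightarrow> A i \<ge> 1"
    and pB: "\<And>i. 1 \<le> i \<Longrightarrow> i < D \<Longrightarrow> B i \<ge> 1"
    and pC: "\<And>i. 1 \<le> i \<Longrightarrow> i < D \<Longrightarrow> C i \<ge> 1"
    and C1: "C 1 = 1"
    and aux: "\<And>i. 1 \<le> i \<Longrightarrow> i \<le> D \<Longrightarrow> s i * r i - s (i-1) * r (i-1) = ep * (s (i-1) * r i - s i * r (i-1))"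
    and nzs: "\<And>j. j < D \<Longrightarrow> \<not> (s j = 0 \<and> s (j+1) = 0)"
    and nzr: "\<And>j. j < D \<Longrightarrow> \<not> (r j = 0 \<and> r (j+1) = 0)"
  shows "\<forall>i. 1 \<le> i \<and> i \<le> D - 1 \<longrightarrow>
           (s (i + 1) - s i) * (s (i - 1) - s i) \<noteq> 0 \<and>
           (s 1 ^ 2 - s 2) * (1 - ep * s 1) \<noteq> 0 \<and>
           A i =
             ((ep - 1) * (1 - s 2) / ((s 1 ^ 2 - s 2) * (1 - ep * s 1))) *
             ((s (i + 1) - s 1 * s i) * (s (i - 1) - s 1 * s i) /
              ((s (i + 1) - s i) * (s (i - 1) - s i)))"
proof -
  define sg where "sg = s 1"
  define rh where "rh = r 1"
  have L1: "1 < D" "2 < D" "3 \<le> D" using D3 by auto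
  have S1: "1 + A 1 * sg + B 1 * s 2 = k * sg * sg" using S[of 1] L1 C1 s0 by (simp add: sg_def numeral_2_eq_2 numeral_3_eq_3)
  have R1: "1 + A 1 * rh + B 1 * r 2 = k * rh * rh" using R[of 1] L1 C1 r0 by (simp add: rh_def numeral_2_eq_2 numeral_3_eq_3)
  have S2: "C 2 * sg + A 2 * s 2 + B 2 * s 3 = k * sg * s 2" using S[of 2] L1 by (simp add: sg_def numeral_2_eq_2 numeral_3_eq_3)
  have R2: "C 2 * rh + A 2 * r 2 + B 2 * r 3 = k * rh * r 2" using R[of 2] L1 by (simp add: rh_def numeral_2_eq_2 numeral_3_eq_3)
  have sum1: "A 1 + B 1 + 1 = k" using sm[of 1] L1 C1 by simp
  have sum2: "A 2 + B 2 + C 2 = k" using sm[of 2] L1 by (simp add: numeral_2_eq_2)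
  have a1: "sg * rh - 1 = ep * (rh - sg)" using aux[of 1] L1 s0 r0 by (simp add: sg_def rh_def numeral_2_eq_2 numeral_3_eq_3)
  have a2: "s 2 * r 2 - sg * rh = ep * (sg * r 2 - s 2 * rh)" using aux[of 2] L1 by (simp add: sg_def rh_def numeral_2_eq_2 numeral_3_eq_3)
  have a3: "s 3 * r 3 - s 2 * r 2 = ep * (s 2 * r 3 - s 3 * r 2)" using aux[of 3] L1 by (simp add: numeral_2_eq_2 numeral_3_eq_3)
  have A1: "A 1 \<ge> 1" "B 1 \<ge> 1" "A 2 \<ge> 1" "B 2 \<ge> 1" "C 2 \<ge> 1" using pA pB pC L1 by auto
  have sg1: "sg \<noteq> 1" "rh \<noteq> 1" using s1 r1 by (auto simp: sg_def rh_def)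
  have KA: "A i * (s (i+1) - s i) * (s (i-1) - s i) * (sg - ep) = k * (1 - ep) * (s (i+1) - sg * s i) * (s (i-1) - sg * s i)"
    if "1 \<le> i" "i < D" "ep \<noteq> -1" for i
  proof (rule KA_full)
    show "A i + B i + C i = k" using sm that by simp
    show "C i * s (i-1) + A i * s i + B i * s (i+1) = k * sg * s i" using S that by (simp add: sg_def numeral_2_eq_2 numeral_3_eq_3)
    show "C i * r (i-1) + A i * r i + B i * r (i+1) = k * rh * r i" using R that by (simp add: rh_def numeral_2_eq_2 numeral_3_eq_3)
    show "s i * r i - s (i-1) * r (i-1) = ep * (s (i-1) * r i - s i * r (i-1))" using aux that by simp
    show "s (i+1) * r (i+1) - s i * r i = ep * (s i * r (i+1) - s (i+1) * r i)" using aux[of "i+1"] that by simp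
    show "sg * rh - 1 = ep * (rh - sg)" by (rule a1)
    show "ep \<noteq> -1" by fact
    show "C i \<noteq> 0" using pC that by force
    show "\<not> (r (i-1) = 0 \<and> r i = 0)" using nzr[of "i-1"] that by simp
  qed
  have epm: "ep \<noteq> -1"
  proof
    assume e: "ep = -1"
    have "(sg+1)*(rh-1) = 0" using a1 e by algebra
    then have sgv: "sg = -1" using sg1 by simp
    have "B 1 * (s 2 - 1) = 2 * A 1" using S1 sum1 sgv by (simp add: algebra_simps) 
    then have s2g: "s 2 > 1" using gt1_help A1 by blast
    have "(s 2 - 1) * (r 2 - rh) = 0" using a2 e sgv by algebra
    then have r2v: "r 2 = rh" using s2g by simp
    have "(rh - 1) * (k*rh + 1) = 0" using R1 sum1 r2v by algebra
    then have "k*rh + 1 = 0" using sg1 by simp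
    then have krh: "k*rh = -1" by linarith
    have "(s 3 + s 2) * (r 3 - r 2) = 0" using a3 e by algebra
    then consider "r 3 = r 2" | "s 3 = - s 2" by (auto simp: add_eq_0_iff)
    then show False
    proof cases
      case 1
      have "rh * (C 2 + A 2 + B 2 + 1) = 0" using R2 1 r2v krh by algebra
      moreover have "rh \<noteq> 0" using krh by auto
      moreover have "C 2 + A 2 + B 2 + 1 \<noteq> 0" using A1 by linarith
      ultimately show False by simp
    next
      case 2
      have "s 2 * (2 * A 2 + C 2) = C 2" using S2 2 sgv sum2 by algebra
      then show False using bad_help s2g A1 by blast
    qed
  qed
  have sgep: "sg \<noteq> ep"
  proof
    assume "sg = ep"
    then have "sg*rh - 1 = sg*(rh - sg)" using a1 by simp
    then have "(sg - 1)*(sg + 1) = 0" by algebra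
    then have "sg = -1" using sg1 by simp
    then show False using epm \<open>sg = ep\<close> by simp
  qed
  have KA1: "A 1 * (s 2 - sg) * (1 - sg) * (sg - ep) = k * (1 - ep) * (s 2 - sg * sg) * (1 - sg * sg)"
    using KA[of 1] L1 epm s0 by (simp add: sg_def numeral_2_eq_2 numeral_3_eq_3)
  have KA2: "A 2 * (s 3 - s 2) * (sg - s 2) * (sg - ep) = k * (1 - ep) * (s 3 - sg * s 2) * (sg - sg * s 2)"
    using KA[of 2] L1 epm by (simp add: sg_def numeral_2_eq_2 numeral_3_eq_3)
  have ep1: "ep \<noteq> 1"
  proof
    assume e: "ep = 1"
    have "(sg-1)*(rh+1) = 0" using a1 e by algebra
    then have rhv: "rh = -1" using sg1 by simp
    have "A 1 * (s 2 - sg) * (1 - sg) * (sg - ep) = 0" using KA1 e by simp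
    moreover have "A 1 \<noteq> 0" "1 - sg \<noteq> 0" "sg - ep \<noteq> 0" using A1 sg1 sgep by auto
    ultimately have s2v: "s 2 = sg" by simp
    have "(sg - 1) * (k*sg + 1) = 0" using S1 sum1 s2v by algebra
    then have "k*sg + 1 = 0" using sg1 by simp
    then have ksg: "k*sg = -1" by linarith
    have "B 1 * (r 2 - 1) = 2 * A 1" using R1 sum1 rhv by (simp add: algebra_simps) 
    then have r2g: "r 2 > 1" using gt1_help A1 by blast
    have "(s 3 - s 2) * (r 3 + r 2) = 0" using a3 e by algebra
    then consider "s 3 = s 2" | "r 3 = - r 2" by (auto simp: add_eq_0_iff)
    then show False
    proof cases
      case 1
      have "sg * (C 2 + A 2 + B 2 + 1) = 0" using S2 1 s2v ksg by algebra
      moreover have "sg \<noteq> 0" using ksg by auto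
      moreover have "C 2 + A 2 + B 2 + 1 \<noteq> 0" using A1 by linarith
      ultimately show False by simp
    next
      case 2
      have "r 2 * (2 * A 2 + C 2) = C 2" using R2 2 rhv sum2 by algebra
      then show False using bad_help r2g A1 by blast
    qed
  qed
  have kpos: "k \<ge> 3" using sum1 A1 by linarith
  have s2sq: "s 2 \<noteq> sg * sg"
  proof
    assume h: "s 2 = sg * sg"
    have "A 1 * (s 2 - sg) * (1 - sg) * (sg - ep) = 0" using KA1 h by simp
    moreover have "A 1 \<noteq> 0" "1 - sg \<noteq> 0" "sg - ep \<noteq> 0" using A1 sg1 sgep by auto
    ultimately have "s 2 = sg" by simp
    then have "sg * sg = sg" using h by simp
    then have "sg * (sg - 1) = 0" by (simp add: right_diff_distrib)
    then have "sg = 0" using sg1 by simp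
    then show False using S1 h by simp
  qed
  have epsg: "1 - ep * sg \<noteq> 0"
  proof
    assume h: "1 - ep * sg = 0"
    have "rh * (sg - ep) = 0" using a1 h by algebra
    then have rh0: "rh = 0" using sgep by simp
    have "B 1 * r 2 = -1" using R1 rh0 by simp
    then have r2: "r 2 \<noteq> 0" by auto
    have "r 2 * (s 2 - 1) = 0" using a2 rh0 h by algebra
    then have s2v: "s 2 = 1" using r2 by simp
    have "A 2 * (s 3 - 1) * (sg - 1) * (sg - ep) = 0" using KA2 s2v by simp
    moreover have "A 2 \<noteq> 0" "sg - 1 \<noteq> 0" "sg - ep \<noteq> 0" using A1 sg1 sgep by auto
    ultimately have s3v: "s 3 = 1" by simp
    have "(A 2 + B 2) * (1 - sg) = 0" using S2 s2v s3v sum2 by algebra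
    then show False using A1 sg1 by simp
  qed
  have M: "A 1 * (sg - s 2) = k*sg*sg - 1 - (k-1)*s 2"
  proof -
    have "A 1 * (sg - s 2) - (k*sg*sg - 1 - (k-1)*s 2) =
      (1 + A 1 * sg + B 1 * s 2 - k * sg * sg) - s 2 * (A 1 + B 1 + 1 - k)"
      by (simp add: algebra_simps)
    then show ?thesis using S1 sum1 by simp
  qed
  have K1: "(1 - s 2) * (sg - ep) = k * (1 - ep * sg) * (s 2 - sg * sg)"
  proof -
    have "(1 - sg) * ((1 - s 2) * (sg - ep) - k * (1 - ep * sg) * (s 2 - sg * sg)) =
      (A 1 * (s 2 - sg) * (1 - sg) * (sg - ep) - k * (1 - ep) * (s 2 - sg * sg) * (1 - sg * sg))
      + (1 - sg) * (sg - ep) * (A 1 * (sg - s 2) - (k*sg*sg - 1 - (k-1)*s 2))"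
      by (simp add: algebra_simps)
    then have "(1 - sg) * ((1 - s 2) * (sg - ep) - k * (1 - ep * sg) * (s 2 - sg * sg)) = 0"
      using KA1 M by simp
    then show ?thesis using sg1 by simp
  qed
  show ?thesis
  proof (intro allI impI)
    fix i assume hi: "1 \<le> i \<and> i \<le> D - 1"
    then have i1: "1 \<le> i" "i < D" using L1 by auto
    have KAi: "A i * (s (i+1) - s i) * (s (i-1) - s i) * (sg - ep) = k * (1 - ep) * (s (i+1) - sg * s i) * (s (i-1) - sg * s i)"
      using KA i1 epm by simp
    have Si: "C i * s (i-1) + A i * s i + B i * s (i+1) = k * sg * s i" using S i1 by (simp add: sg_def numeral_2_eq_2 numeral_3_eq_3)
    have smi: "A i + B i + C i = k" using sm i1 by simp
    have pi: "A i \<ge> 1" "B i \<ge> 1" "C i \<ge> 1" using pA pB pC i1 by auto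
    have G1: "(s (i + 1) - s i) * (s (i - 1) - s i) \<noteq> 0"
    proof
      assume h0: "(s (i + 1) - s i) * (s (i - 1) - s i) = 0"
      have si: "s i \<noteq> 0"
      proof
        assume "s i = 0"
        then have "s (i+1) = 0 \<or> s (i-1) = 0" using h0 by simp
        then show False using nzs[of i] nzs[of "i-1"] i1 \<open>s i = 0\<close> by auto
      qed
      have "s (i+1) - s i = 0 \<or> s (i-1) - s i = 0" using h0 by simp
      then have "k * (1 - ep) * (s (i+1) - sg * s i) * (s (i-1) - sg * s i) = 0" using KAi by auto
      then have h1: "(s (i+1) - sg * s i) * (s (i-1) - sg * s i) = 0" using kpos ep1 by simp
      have ssg: "s i - sg * s i \<noteq> 0"
      proof -
        have "s i - sg * s i = s i * (1 - sg)" by (simp add: algebra_simps)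
        then show ?thesis using si sg1 by simp
      qed
      from h0 consider "s (i+1) = s i" | "s (i-1) = s i" by auto
      then show False
      proof cases
        case 1
        then have "(s i - sg * s i) * (s (i-1) - sg * s i) = 0" using h1 by simp
        then have e: "s (i-1) = sg * s i" using ssg by simp
        have "s i * ((A i + B i) * (1 - sg)) = (C i * (sg * s i) + A i * s i + B i * s i) - k * sg * s i + (k - (A i + B i + C i)) * sg * s i"
          by (simp add: algebra_simps)
        also have "\<dots> = 0" using Si smi unfolding 1 e by simp
        finally show False using si sg1 pi by simp
      next
        case 2
        then have "(s (i+1) - sg * s i) * (s i - sg * s i) = 0" using h1 by simp
        then have e: "s (i+1) = sg * s i" using ssg by simp
        have "s i * ((A i + C i) * (1 - sg)) = (C i * s i + A i * s i + B i * (sg * s i)) - k * sg * s i + (k - (A i + B i + C i)) * sg * s i"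
          by (simp add: algebra_simps)
        also have "\<dots> = 0" using Si smi unfolding 2 e by simp
        finally show False using si sg1 pi by simp
      qed
    qed
    have G2: "(s 1 ^ 2 - s 2) * (1 - ep * s 1) \<noteq> 0"
      using s2sq epsg by (simp add: sg_def power2_eq_square)
    have gv: "(ep - 1) * (1 - s 2) / ((s 1 ^ 2 - s 2) * (1 - ep * s 1)) = k * (1 - ep) / (sg - ep)"
    proof -
      have "s 1 ^ 2 - s 2 \<noteq> 0" "1 - ep * s 1 \<noteq> 0" "sg - ep \<noteq> 0" using G2 sgep by auto
      moreover have "(ep - 1) * (1 - s 2) * (sg - ep) - k * (1 - ep) * ((s 1 ^ 2 - s 2) * (1 - ep * s 1))
          = (ep - 1) * ((1 - s 2) * (sg - ep) - k * (1 - ep * sg) * (s 2 - sg * sg))"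
        unfolding sg_def by (simp add: algebra_simps power2_eq_square)
      ultimately show ?thesis using K1 by (simp add: frac_eq_eq)
    qed
    have G3: "A i = ((ep - 1) * (1 - s 2) / ((s 1 ^ 2 - s 2) * (1 - ep * s 1))) *
             ((s (i + 1) - s 1 * s i) * (s (i - 1) - s 1 * s i) /
              ((s (i + 1) - s i) * (s (i - 1) - s i)))"
    proof -
      have "k * (1 - ep) / (sg - ep) * ((s (i + 1) - sg * s i) * (s (i - 1) - sg * s i) /
              ((s (i + 1) - s i) * (s (i - 1) - s i))) =
            (k * (1 - ep) * ((s (i + 1) - sg * s i) * (s (i - 1) - sg * s i))) /
              ((sg - ep) * ((s (i + 1) - s i) * (s (i - 1) - s i)))" by simp
      also have "\<dots> = A i"
      proof (rule divide_eq_imp)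
        show "k * (1 - ep) * ((s (i + 1) - sg * s i) * (s (i - 1) - sg * s i)) = A i * ((sg - ep) * ((s (i + 1) - s i) * (s (i - 1) - s i)))"
          using KAi by (simp add: ac_simps)
        show "(sg - ep) * ((s (i + 1) - s i) * (s (i - 1) - s i)) \<noteq> 0" using G1 sgep by simp
      qed
      finally show ?thesis unfolding gv sg_def by simp
    qed
    show "(s (i + 1) - s i) * (s (i - 1) - s i) \<noteq> 0 \<and>
           (s 1 ^ 2 - s 2) * (1 - ep * s 1) \<noteq> 0 \<and>
           A i =
             ((ep - 1) * (1 - s 2) / ((s 1 ^ 2 - s 2) * (1 - ep * s 1))) *
             ((s (i + 1) - s 1 * s i) * (s (i - 1) - s 1 * s i) /
              ((s (i + 1) - s i) * (s (i - 1) - s i)))"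
      using G1 G2 G3 by blast
  qed
qed



context
  fixes V :: "'v set" and E :: "'v \<Rightarrow> 'v \<Rightarrow> bool"
  assumes sg: "simple_graph V E" and cg: "connected_graph V E"
begin

lemma E_V: "E x y \<Longrightarrow> x \<in> V \<and> y \<in> V" using sg unfolding simple_graph_def by blast
lemma E_sym: "E x y \<Longrightarrow> E y x" using sg unfolding simple_graph_def by blast
lemma E_irr: "\<not> E x x" using sg unfolding simple_graph_def by blast
lemma V_fin: "finite V" using sg unfolding simple_graph_def by blast
lemma V_ne: "V \<noteq> {}" using sg unfolding simple_graph_def by blast

lemma walk_V: "walk_n V E n x y \<Longrightarrow> x \<in> V \<and> y \<in> V"
  by (induction n arbitrary: x) (auto dest: E_V)

lemma walk_app: "walk_n V E m x v \<Longrightarrow> walk_n V E n v y \<Longrightarrow> walk_n V E (m+n) x y"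
  by (induction m arbitrary: x) auto

lemma walk_split: "walk_n V E (m+n) x y \<Longrightarrow> \<exists>v. walk_n V E m x v \<and> walk_n V E n v y"
proof (induction m arbitrary: x)
  case 0
  then show ?case using walk_V by auto
next
  case (Suc m)
  then obtain z where "E x z" "walk_n V E (m+n) z y" by auto
  then obtain v where "walk_n V E m z v" "walk_n V E n v y" using Suc.IH by blast
  then show ?case using \<open>E x z\<close> by auto
qed

lemma gd_walk: "x \<in> V \<Longrightarrow> y \<in> V \<Longrightarrow> walk_n V E (gdist V E x y) x y"
  unfolding gdist_def using cg unfolding connected_graph_def by (meson LeastI_ex)

lemma gd_le: "walk_n V E n x y \<Longrightarrow> gdist V E x y \<le> n"
  unfolding gdist_def by (rule Least_le)

lemma gd_tri: "x \<in> V \<Longrightarrow> y \<in> V \<Longrightarrow> z \<in> V \<Longrightarrow> gdist V E x z \<le> gdist V E x y + gdist V E y z"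
  using gd_walk[of x y] gd_walk[of y z] walk_app gd_le by blast

lemma gd_E: "E x y \<Longrightarrow> gdist V E x y \<le> 1"
proof -
  assume "E x y"
  then have "walk_n V E 1 x y" using E_V by auto
  then show ?thesis by (rule gd_le)
qed

lemma gd_0: "x \<in> V \<Longrightarrow> y \<in> V \<Longrightarrow> gdist V E x y = 0 \<longleftrightarrow> x = y"
proof
  assume "x \<in> V" "y \<in> V" "gdist V E x y = 0"
  then show "x = y" using gd_walk[of x y] by auto
next
  assume "x \<in> V" "x = y"
  then show "gdist V E x y = 0" using gd_le[of 0 x y] by auto
qed

lemma gd_E1: "E x y \<Longrightarrow> gdist V E x y = 1"
  using gd_E[of x y] gd_0[of x y] E_V[of x y] E_irr[of x] by fastforce

lemma gd_1E: "x \<in> V \<Longrightarrow> y \<in> V \<Longrightarrow> gdist V E x y = 1 \<Longrightarrow> E x y"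
  using gd_walk[of x y] by auto

lemma gd_nb: "x \<in> V \<Longrightarrow> E y z \<Longrightarrow> gdist V E x z \<le> gdist V E x y + 1 \<and> gdist V E x y \<le> gdist V E x z + 1"
  using gd_tri[of x y z] gd_tri[of x z y] gd_E[of y z] gd_E[of z y] E_sym[of y z] E_V[of y z] by fastforce

end

lemma dr_facts:
  assumes dr: "distance_regular V E D a b c"
  shows "simple_graph V E" "connected_graph V E" "c 0 = 0" "b D = 0"
    "diameter V E = D"
    "\<And>x y. x \<in> V \<Longrightarrow> y \<in> V \<Longrightarrow> 1 \<le> gdist V E x y \<Longrightarrow>
       card {z\<in>V. E y z \<and> gdist V E x z + 1 = gdist V E x y} = c (gdist V E x y)"
    "\<And>x y. x \<in> V \<Longrightarrow> y \<in> V \<Longrightarrow>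
       card {z\<in>V. E y z \<and> gdist V E x z = gdist V E x y} = a (gdist V E x y)"
    "\<And>x y. x \<in> V \<Longrightarrow> y \<in> V \<Longrightarrow> gdist V E x y < D \<Longrightarrow>
       card {z\<in>V. E y z \<and> gdist V E x z = gdist V E x y + 1} = b (gdist V E x y)"
  using dr unfolding distance_regular_def Let_def by auto


lemma dr_pairD:
  assumes dr: "distance_regular V E D a b c"
  shows "\<exists>x\<in>V. \<exists>w\<in>V. gdist V E x w = D"
proof -
  note f = dr_facts[OF dr]
  let ?S = "{gdist V E x y | x y. x \<in> V \<and> y \<in> V}"
  have "?S = (\<lambda>(x,y). gdist V E x y) ` (V \<times> V)" by auto
  then have fin: "finite ?S" using V_fin[OF f(1) f(2)] by simp
  have ne: "?S \<noteq> {}" using V_ne[OF f(1) f(2)] by auto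
  have "Max ?S \<in> ?S" using Max_in[OF fin ne] .
  then obtain x y where xy: "Max ?S = gdist V E x y" "x \<in> V" "y \<in> V" by auto
  moreover have "Max ?S = D" using f(5) unfolding diameter_def by simp
  ultimately show ?thesis by auto
qed

lemma dr_triple:
  assumes dr: "distance_regular V E D a b c" and iD: "i < D"
  shows "\<exists>x y z. x \<in> V \<and> y \<in> V \<and> z \<in> V \<and> gdist V E x y = i \<and> E y z \<and>
           gdist V E x z = i + 1 \<and> walk_n V E i x y"
proof -
  note f = dr_facts[OF dr]
  note sg = f(1) and cg = f(2)
  obtain x w where xw: "x \<in> V" "w \<in> V" "gdist V E x w = D" using dr_pairD[OF dr] by blast
  have eqD: "i + Suc (D - i - 1) = D" using iD by arith
  have "walk_n V E (i + Suc (D - i - 1)) x w" unfolding eqD using gd_walk[OF sg cg xw(1,2)] xw(3) by simp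
  then obtain y where y: "walk_n V E i x y" "walk_n V E (Suc (D - i - 1)) y w"
    using walk_split[OF sg cg] by blast
  then obtain z where z: "E y z" "walk_n V E (D - i - 1) z w" by auto
  have yV: "y \<in> V" "z \<in> V" using walk_V[OF sg cg y(1)] E_V[OF sg cg z(1)] by auto
  have d1: "gdist V E x y \<le> i" using gd_le[OF sg cg y(1)] .
  have d2: "gdist V E z w \<le> D - i - 1" using gd_le[OF sg cg z(2)] .
  have t1: "D \<le> gdist V E x z + gdist V E z w" using gd_tri[OF sg cg xw(1) yV(2) xw(2)] xw(3) by simp
  have t2: "gdist V E x z \<le> gdist V E x y + 1 \<and> gdist V E x y \<le> gdist V E x z + 1"
    using gd_nb[OF sg cg xw(1) z(1)] .
  have "gdist V E x z = i + 1" "gdist V E x y = i" using d1 d2 t1 t2 iD by linarith+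
  then show ?thesis using xw(1) yV y(1) z(1) by blast
qed

lemma cardpos1: "finite S \<Longrightarrow> u \<in> S \<Longrightarrow> 1 \<le> card S"
proof -
  assume "finite S" "u \<in> S"
  then have "card S \<noteq> 0" by auto
  then show ?thesis by simp
qed

lemma dr_params:
  assumes dr: "distance_regular V E D a b c" and D1: "1 \<le> D"
  shows "a 0 = 0" "c 1 = 1" "\<And>i. i < D \<Longrightarrow> a i + b i + c i = b 0"
    "\<And>i. i < D \<Longrightarrow> b i \<ge> 1" "\<And>i. 1 \<le> i \<Longrightarrow> i \<le> D \<Longrightarrow> c i \<ge> 1"
proof -
  note f = dr_facts[OF dr]
  note sg = f(1) and cg = f(2)
  obtain x0 where x0: "x0 \<in> V" using V_ne[OF sg cg] by blast
  have g00: "gdist V E x0 x0 = 0" using gd_0[OF sg cg x0 x0] by simp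
  have emp: "{z\<in>V. E x0 z \<and> gdist V E x0 z = gdist V E x0 x0} = {}"
    using gd_0[OF sg cg x0] E_irr[OF sg cg] g00 by auto
  have "card {z\<in>V. E x0 z \<and> gdist V E x0 z = gdist V E x0 x0} = a (gdist V E x0 x0)" by (rule f(7)[OF x0 x0])
  then have "card ({}::'a set) = a (gdist V E x0 x0)" by (simp only: emp)
  then show "a 0 = 0" using g00 by simp
  have deg: "card {z\<in>V. E y z} = b 0" if yV: "y \<in> V" for y
  proof -
    have g: "gdist V E y y = 0" using gd_0[OF sg cg yV yV] by simp
    have "{z\<in>V. E y z \<and> gdist V E y z = gdist V E y y + 1} = {z\<in>V. E y z}"
      using gd_E1[OF sg cg] g by auto
    then show ?thesis using f(8)[OF yV yV] g D1 by simp
  qed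
  show "c 1 = 1"
  proof -
    obtain x y z where t: "x \<in> V" "y \<in> V" "z \<in> V" "gdist V E x y = 0" "E y z" "gdist V E x z = 0 + 1"
      using dr_triple[OF dr, of 0] D1 by auto
    have "x = y" using t gd_0[OF sg cg] by auto
    have "{w\<in>V. E z w \<and> gdist V E x w + 1 = gdist V E x z} = {x}"
      using t gd_0[OF sg cg t(1)] \<open>x = y\<close> E_sym[OF sg cg t(5)] by auto
    then show ?thesis using f(6)[OF t(1) t(3)] t(6) by simp
  qed
  show "a i + b i + c i = b 0" if iD: "i < D" for i
  proof (cases "i = 0")
    case True
    then show ?thesis using \<open>a 0 = 0\<close> f(3) by simp
  next
    case False
    obtain x y z where t: "x \<in> V" "y \<in> V" "z \<in> V" "gdist V E x y = i" "E y z" "gdist V E x z = i + 1"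
      using dr_triple[OF dr iD] by auto
    define C where "C = {w\<in>V. E y w \<and> gdist V E x w + 1 = i}"
    define A where "A = {w\<in>V. E y w \<and> gdist V E x w = i}"
    define B where "B = {w\<in>V. E y w \<and> gdist V E x w = i + 1}"
    have fin: "finite C" "finite A" "finite B" using V_fin[OF sg cg] unfolding A_def B_def C_def by auto
    have un: "{w\<in>V. E y w} = C \<union> A \<union> B"
    proof -
      have "gdist V E x w + 1 = i \<or> gdist V E x w = i \<or> gdist V E x w = i + 1" if "E y w" for w
        using gd_nb[OF sg cg t(1) that] t(4) by linarith
      then show ?thesis unfolding A_def B_def C_def by auto
    qed
    have dj: "C \<inter> A = {}" "(C \<union> A) \<inter> B = {}" unfolding A_def B_def C_def by auto
    have "card (C \<union> A \<union> B) = card (C \<union> A) + card B" using fin dj by (simp add: card_Un_disjoint)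
    also have "\<dots> = card C + card A + card B" using fin dj by (simp add: card_Un_disjoint)
    finally have "card (C \<union> A \<union> B) = card C + card A + card B" .
    moreover have "card C = c i" using f(6)[OF t(1) t(2)] t(4) False unfolding C_def by simp
    moreover have "card A = a i" using f(7)[OF t(1) t(2)] t(4) unfolding A_def by simp
    moreover have "card B = b i" using f(8)[OF t(1) t(2)] t(4) iD unfolding B_def by simp
    ultimately show ?thesis using deg[OF t(2)] un by simp
  qed
  show "b i \<ge> 1" if iD: "i < D" for i
  proof -
    obtain x y z where t: "x \<in> V" "y \<in> V" "z \<in> V" "gdist V E x y = i" "E y z" "gdist V E x z = i + 1"
      using dr_triple[OF dr iD] by auto
    have "z \<in> {w\<in>V. E y w \<and> gdist V E x w = gdist V E x y + 1}" using t by simp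
    moreover have "finite {w\<in>V. E y w \<and> gdist V E x w = gdist V E x y + 1}" using V_fin[OF sg cg] by simp
    ultimately have "card {w\<in>V. E y w \<and> gdist V E x w = gdist V E x y + 1} \<ge> 1"
      by (rule cardpos1[rotated])
    then show ?thesis using f(8)[OF t(1) t(2)] t(4) iD by simp
  qed
  show "c i \<ge> 1" if i1: "1 \<le> i" "i \<le> D" for i
  proof -
    obtain x y z where t: "x \<in> V" "y \<in> V" "z \<in> V" "gdist V E x y = i - 1" "E y z" "gdist V E x z = i - 1 + 1"
    proof -
      have "i - 1 < D" using i1 by arith
      then show ?thesis using dr_triple[OF dr, of "i - 1"] that by blast
    qed
    have gz: "gdist V E x z = i" using t(6) i1 by simp
    have "y \<in> {w\<in>V. E z w \<and> gdist V E x w + 1 = gdist V E x z}" using t gz i1 E_sym[OF sg cg t(5)] by simp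
    moreover have "finite {w\<in>V. E z w \<and> gdist V E x w + 1 = gdist V E x z}" using V_fin[OF sg cg] by simp
    ultimately have "card {w\<in>V. E z w \<and> gdist V E x w + 1 = gdist V E x z} \<ge> 1"
      by (rule cardpos1[rotated])
    then show ?thesis using f(6)[OF t(1) t(3)] gz i1 by simp
  qed
qed

lemma dr_a_pos:
  assumes dr: "distance_regular V E D a b c" and a1: "a 1 \<noteq> 0" and i1: "1 \<le> i" "i < D"
  shows "a i \<ge> 1"
proof -
  note f = dr_facts[OF dr]
  note sg = f(1) and cg = f(2)
  have cardpos: "card S \<ge> 1" if "u \<in> S" "S \<subseteq> V" for u S
    using that V_fin[OF sg cg] by (intro cardpos1[of S u]) (auto intro: finite_subset)
  obtain x y z where t: "x \<in> V" "y \<in> V" "z \<in> V" "gdist V E x y = i" "E y z" "gdist V E x z = i + 1"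
      "walk_n V E i x y"
    using dr_triple[OF dr i1(2)] by auto
  have gyz: "gdist V E y z = 1" using gd_E1[OF sg cg t(5)] .
  have "card {w\<in>V. E z w \<and> gdist V E y w = 1} = a 1" using f(7)[OF t(2) t(3)] gyz by simp
  then have "{w\<in>V. E z w \<and> gdist V E y w = 1} \<noteq> {}" using a1 by (metis card.empty)
  then obtain w where w: "w \<in> V" "E z w" "gdist V E y w = 1" by auto
  have Eyw: "E y w" using gd_1E[OF sg cg t(2) w(1) w(3)] .
  have n1: "gdist V E x w \<le> i + 1 \<and> i \<le> gdist V E x w + 1" using gd_nb[OF sg cg t(1) Eyw] t(4) by simp
  have n2: "gdist V E x z \<le> gdist V E x w + 1" using gd_nb[OF sg cg t(1) w(2)] by simp
  show ?thesis
  proof (cases "gdist V E x w = i")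
    case True
    have "w \<in> {u\<in>V. E y u \<and> gdist V E x u = gdist V E x y}" using w Eyw True t(4) by simp
    then have "card {u\<in>V. E y u \<and> gdist V E x u = gdist V E x y} \<ge> 1" by (rule cardpos) auto
    then show ?thesis using f(7)[OF t(1) t(2)] t(4) by simp
  next
    case False
    then have gxw: "gdist V E x w = i + 1" using n1 n2 t(6) by linarith
    obtain j where j: "i = Suc j" using i1 by (cases i) auto
    obtain v where v: "E x v" "walk_n V E j v y" using t(7) j by auto
    have vV: "v \<in> V" using E_V[OF sg cg v(1)] by simp
    have gvy: "gdist V E v y \<le> j" using gd_le[OF sg cg v(2)] .
    have gxv: "gdist V E x v \<le> 1" using gd_E[OF sg cg v(1)] .
    have a: "gdist V E x w \<le> gdist V E x v + gdist V E v w" using gd_tri[OF sg cg t(1) vV w(1)] .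
    have b: "gdist V E v w \<le> gdist V E v y + gdist V E y w" using gd_tri[OF sg cg vV t(2) w(1)] .
    have c': "gdist V E v z \<le> gdist V E v y + gdist V E y z" using gd_tri[OF sg cg vV t(2) t(3)] .
    have d: "gdist V E x z \<le> gdist V E x v + gdist V E v z" using gd_tri[OF sg cg t(1) vV t(3)] .
    have gvw: "gdist V E v w = i" using a b gxw gxv gvy w(3) j by linarith
    have gvz: "gdist V E v z = i" using c' d gyz t(6) gxv gvy j by linarith
    have "z \<in> {u\<in>V. E w u \<and> gdist V E v u = gdist V E v w}" using t(3) E_sym[OF sg cg w(2)] gvw gvz by simp
    then have "card {u\<in>V. E w u \<and> gdist V E v u = gdist V E v w} \<ge> 1" by (rule cardpos) auto
    then show ?thesis using f(7)[OF vV w(1)] gvw by simp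
  qed
qed



lemma pc_consec:
  assumes pc: "pseudo_cosine D a b c th s" and cpos: "\<And>i. 1 \<le> i \<Longrightarrow> i < D \<Longrightarrow> c i \<ge> 1"
  shows "j < D \<Longrightarrow> s j = 0 \<Longrightarrow> s (j+1) = 0 \<Longrightarrow> False"
proof (induction j)
  case 0
  then show ?case using pc unfolding pseudo_cosine_def by simp
next
  case (Suc m)
  have "real (c (Suc m)) * s m + real (a (Suc m)) * s (Suc m) + real (b (Suc m)) * s (Suc m + 1) = th * s (Suc m)"
    using pc Suc.prems(1) unfolding pseudo_cosine_def by auto
  then have "real (c (Suc m)) * s m = 0" using Suc.prems by simp
  moreover have "c (Suc m) \<ge> 1" using cpos Suc.prems(1) by simp
  ultimately have "s m = 0" by simp
  then show ?case using Suc.IH Suc.prems by simp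
qed

lemma pc_levels:
  assumes pc: "pseudo_cosine D a b c th s" and a0: "a 0 = 0" and D1: "1 \<le> D"
  shows "s 0 = 1" "\<And>i. 1 \<le> i \<Longrightarrow> i < D \<Longrightarrow>
     real (c i) * s (i-1) + real (a i) * s i + real (b i) * s (i+1) = real (b 0) * s 1 * s i"
proof -
  show s0: "s 0 = 1" using pc unfolding pseudo_cosine_def by simp
  have "real (c 0) * 0 + real (a 0) * s 0 + real (b 0) * s 1 = th * s 0"
    using pc D1 unfolding pseudo_cosine_def by fastforce
  then have th: "th = real (b 0) * s 1" using a0 s0 by simp
  fix i assume "1 \<le> i" "i < D"
  then show "real (c i) * s (i-1) + real (a i) * s i + real (b i) * s (i+1) = real (b 0) * s 1 * s i"
    using pc th unfolding pseudo_cosine_def by auto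
qed

theorem lemma13p2:
  fixes V :: "'v set" and E :: "'v \<Rightarrow> 'v \<Rightarrow> bool"
    and D :: nat and a b c :: "nat \<Rightarrow> nat"
    and \<sigma> :: "nat \<Rightarrow> real" and \<epsilon> :: real
  assumes "distance_regular V E D a b c"
    and "D \<ge> 3"
    and "a 1 \<noteq> 0"
    and "nontrivial_pc D a b c \<sigma>"
    and "tight_with_aux D a b c \<sigma> \<epsilon>"
  shows "\<forall>i. 1 \<le> i \<and> i \<le> D - 1 \<longrightarrow>
           (\<sigma> (i + 1) - \<sigma> i) * (\<sigma> (i - 1) - \<sigma> i) \<noteq> 0 \<and>
           (\<sigma> 1 ^ 2 - \<sigma> 2) * (1 - \<epsilon> * \<sigma> 1) \<noteq> 0 \<and>
           real (a i) =
             ((\<epsilon> - 1) * (1 - \<sigma> 2) / ((\<sigma> 1 ^ 2 - \<sigma> 2) * (1 - \<epsilon> * \<sigma> 1))) *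
             ((\<sigma> (i + 1) - \<sigma> 1 * \<sigma> i) * (\<sigma> (i - 1) - \<sigma> 1 * \<sigma> i) /
              ((\<sigma> (i + 1) - \<sigma> i) * (\<sigma> (i - 1) - \<sigma> i)))"
proof -
  note dr = assms(1)
  have D1: "1 \<le> D" using assms(2) by simp
  note P = dr_params[OF dr D1]
  obtain \<rho> where rho: "nontrivial_pc D a b c \<rho>" "tight_pair D a b c \<sigma> \<rho>" "auxiliary_parameter D \<sigma> \<rho> \<epsilon>"
    using assms(5) unfolding tight_with_aux_def by blast
  obtain th where ths: "pseudo_cosine D a b c th \<sigma>" and s1: "\<sigma> 1 \<noteq> 1"
    using assms(4) unfolding nontrivial_pc_def is_pseudo_cosine_def by blast
  obtain th' where thr: "pseudo_cosine D a b c th' \<rho>" and r1: "\<rho> 1 \<noteq> 1"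
    using rho(1) unfolding nontrivial_pc_def is_pseudo_cosine_def by blast
  have cpos: "\<And>i. 1 \<le> i \<Longrightarrow> i < D \<Longrightarrow> c i \<ge> 1" using P(5) by simp
  note Ls = pc_levels[OF ths P(1) D1] and Lr = pc_levels[OF thr P(1) D1]
  have sum: "real (a i) + real (b i) + real (c i) = real (b 0)" if "1 \<le> i" "i < D" for i
  proof -
    have "a i + b i + c i = b 0" using P(3) that by simp
    then show ?thesis by (metis of_nat_add)
  qed
  show ?thesis
    apply (rule main_alg[where A = "\<lambda>i. real (a i)" and B = "\<lambda>i. real (b i)" and C = "\<lambda>i. real (c i)"
        and k = "real (b 0)" and r = \<rho>])
    subgoal using assms(2) by simp
    subgoal by (rule Ls(1))
    subgoal by (rule Lr(1))
    subgoal by (rule s1)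
    subgoal by (rule r1)
    subgoal using Ls(2) by simp
    subgoal using Lr(2) by simp
    subgoal using sum by simp
    subgoal using dr_a_pos[OF dr assms(3)] by simp
    subgoal using P(4) by simp
    subgoal using P(5) by simp
    subgoal using P(2) by simp
    subgoal using rho(3) unfolding auxiliary_parameter_def by simp
    subgoal using pc_consec[OF ths cpos] by auto
    subgoal using pc_consec[OF thr cpos] by auto
    done
qed


end
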